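(* Assume the general setting of the context, with Hypothesis A holding for $r=\sum_{i=0}^{\bar k}r_i$. If $\hat\delta\in(0,\infty)^{\bar k}$ is feasible, then the map $\delta\mapsto\inf_{\pi\in\mathcal H(\delta)}\pi(r_0)$ is continuous at $\hat\delta$.
   Context: General setting. Consider the controlled diffusion $dX_t=b(X_t,U_t)\,dt+\sigma(X_t)\,dW_t$ in $\mathbb R^d$, where $W$ is a standard $d$-dimensional Brownian motion and the control takes values in a compact metrizable set $\mathbb U$. Assume: $b$ continuous and, together with $\sigma$, locally Lipschitz in $x$ (uniformly in $u$); $|b(x,u)|^2+\|\sigma(x)\|^2\le C(1+|x|^2)$; $a=\sigma\sigma^{\mathsf T}$ uniformly positive definite on every ball. Controls may be relaxed ($\mathcal P(\mathbb U)$-valued, with $b$ and costs extended by integration). Controlled generator $\mathcal L^u f=\tfrac12\sum a_{ij}\partial_{ij}f+b(x,u)\cdot\nabla f$. $\mathscr G=\{\pi\in\mathcal P(\mathbb R^d\times\mathbb U):\int\mathcal L^u f\,d\pi=0\ \forall f\in C_c^\infty(\mathbb R^d)\}$ (the set of ergodic occupation measures of stable stationary Markov controls); $\pi(g)=\int g\,d\pi$. Costs $r_0,\dots,r_{\bar k}\ge0$ continuous, locally Lipschitz in $x$ uniformly in $u$; $r=\sum_i r_i$. For $\delta\in\mathbb R_+^{\bar k}$: $\mathcal H(\delta)=\{\pi\in\mathscr G:\pi(r_i)\le\delta_i,\ i=1,\dots,\bar k\}$ and $\mathcal H^{\circ}(\delta)=\{\pi\in\mathscr G:\pi(r_i)<\delta_i,\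 i=1,\dots,\bar k\}$. A vector $\delta\in(0,\infty)^{\bar k}$ is feasible if there is $\pi'\in\mathcal H^\circ(\delta)$ with $\pi'(r_0)<\infty$. Hypothesis A (for a cost $r$): there is an open $\mathcal K\subset\mathbb R^d$ such that (i) $\bar{\mathcal K}\cap\{x:\min_u r(x,u)\le c\}$ is compact for all $c$; (ii) there exist nonnegative inf-compact $\mathcal V\in C^2(\mathbb R^d)$ and $h\in C(\mathbb R^d\times\mathbb U)$ with $\mathcal L^u\mathcal V\le1-h$ on $\mathcal K^c\times\mathbb U$ and $\mathcal L^u\mathcal V\le 1+r$ on $\mathcal K\times\mathbb U$. *)

theory Defs
  imports "HOL-Probability.Probability"
begin

definition pd :: "'n::finite \<Rightarrow> (real^'n \<Rightarrow> real) \<Rightarrow> real^'n \<Rightarrow> real" where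
  "pd i f x = frechet_derivative f (at x) (axis i 1)"

fun iter_pd :: "'n::finite list \<Rightarrow> (real^'n \<Rightarrow> real) \<Rightarrow> real^'n \<Rightarrow> real" where
  "iter_pd [] f = f"
| "iter_pd (i # is) f = pd i (iter_pd is f)"

definition smooth_fun :: "(real^'n::finite \<Rightarrow> real) \<Rightarrow> bool" where
  "smooth_fun f \<longleftrightarrow> (\<forall>is x. iter_pd is f differentiable (at x))"

definition Cc_inf :: "(real^'n::finite \<Rightarrow> real) set" where
  "Cc_inf = {f. smooth_fun f \<and> compact (closure {x. f x \<noteq> 0})}"

definition C2_fun :: "(real^'n::finite \<Rightarrow> real) \<Rightarrow> bool" where
  "C2_fun f \<longleftrightarrow> (\<forall>x. f differentiable (at x)) \<and>
     (\<forall>i x. pd i f differentiable (at x)) \<and>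
     (\<forall>i j. continuous_on UNIV (pd i (pd j f)))"

definition Lgen :: "(real^'n \<Rightarrow> real^'n^'n) \<Rightarrow> (real^'n \<Rightarrow> 'u \<Rightarrow> real^'n)
    \<Rightarrow> (real^'n::finite \<Rightarrow> real) \<Rightarrow> real^'n \<Rightarrow> 'u \<Rightarrow> real" where
  "Lgen \<sigma> b f x u =
     (1/2) * (\<Sum>i\<in>UNIV. \<Sum>j\<in>UNIV. ((\<sigma> x ** transpose (\<sigma> x)) $ i $ j) * pd i (pd j f) x)
     + (\<Sum>i\<in>UNIV. (b x u) $ i * pd i f x)"

definition prob_on :: "'u::metric_space set \<Rightarrow> ((real^'n::finite) \<times> 'u) measure \<Rightarrow> bool" where
  "prob_on U \<pi> \<longleftrightarrow> prob_space \<pi> \<and> sets \<pi> = sets borel \<and> emeasure \<pi> (UNIV \<times> U) = 1"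

definition occ_G :: "'u::metric_space set \<Rightarrow> (real^'n \<Rightarrow> real^'n^'n) \<Rightarrow> (real^'n \<Rightarrow> 'u \<Rightarrow> real^'n)
     \<Rightarrow> ((real^'n::finite) \<times> 'u) measure set" where
  "occ_G U \<sigma> b = {\<pi>. prob_on U \<pi> \<and>
      (\<forall>f\<in>Cc_inf. (\<integral>z. Lgen \<sigma> b f (fst z) (snd z) \<partial>\<pi>) = 0)}"

definition cost_int :: "((real^'n::finite) \<times> 'u) measure \<Rightarrow> (real^'n \<Rightarrow> 'u \<Rightarrow> real) \<Rightarrow> ennreal" where
  "cost_int \<pi> g = (\<integral>\<^sup>+ z. ennreal (g (fst z) (snd z)) \<partial>\<pi>)"

text \<open>\<H>(\<delta>), \<H>\<degree>(\<delta>); the constraint costs are indexed by the finite type 'k (k-bar = CARD('k)).\<close>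
definition H_set :: "'u::metric_space set \<Rightarrow> (real^'n \<Rightarrow> real^'n^'n) \<Rightarrow> (real^'n \<Rightarrow> 'u \<Rightarrow> real^'n)
     \<Rightarrow> ('k::finite \<Rightarrow> real^'n::finite \<Rightarrow> 'u \<Rightarrow> real) \<Rightarrow> real^'k \<Rightarrow> ((real^'n) \<times> 'u) measure set" where
  "H_set U \<sigma> b rc \<delta> = {\<pi>\<in>occ_G U \<sigma> b. \<forall>i. cost_int \<pi> (rc i) \<le> ennreal (\<delta> $ i)}"

definition H_open :: "'u::metric_space set \<Rightarrow> (real^'n \<Rightarrow> real^'n^'n) \<Rightarrow> (real^'n \<Rightarrow> 'u \<Rightarrow> real^'n)
     \<Rightarrow> ('k::finite \<Rightarrow> real^'n::finite \<Rightarrow> 'u \<Rightarrow> real) \<Rightarrow> real^'k \<Rightarrow> ((real^'n) \<times> 'u) measure set" where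
  "H_open U \<sigma> b rc \<delta> = {\<pi>\<in>occ_G U \<sigma> b. \<forall>i. cost_int \<pi> (rc i) < ennreal (\<delta> $ i)}"

definition feasible where
  "feasible U \<sigma> b r0 rc \<delta> \<longleftrightarrow> (\<forall>i. 0 < \<delta> $ i) \<and>
      (\<exists>\<pi>'\<in>H_open U \<sigma> b rc \<delta>. cost_int \<pi>' r0 < \<infinity>)"

definition opt_val where
  "opt_val U \<sigma> b r0 rc \<delta> = (INF \<pi>\<in>H_set U \<sigma> b rc \<delta>. cost_int \<pi> r0)"

definition loc_lipschitz_unif :: "'u set \<Rightarrow> (real^'n::finite \<Rightarrow> 'u \<Rightarrow> 'b::real_normed_vector) \<Rightarrow> bool" where
  "loc_lipschitz_unif U g \<longleftrightarrow> (\<forall>R>0. \<exists>L. \<forall>u\<in>U. \<forall>x\<in>cball 0 R. \<forall>y\<in>cball 0 R.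
       norm (g x u - g y u) \<le> L * norm (x - y))"

definition inf_compact_x :: "(real^'n::finite \<Rightarrow> real) \<Rightarrow> bool" where
  "inf_compact_x V \<longleftrightarrow> (\<forall>c. compact {x. V x \<le> c})"

definition inf_compact_xu :: "'u::metric_space set \<Rightarrow> (real^'n::finite \<Rightarrow> 'u \<Rightarrow> real) \<Rightarrow> bool" where
  "inf_compact_xu U h \<longleftrightarrow> (\<forall>c. compact {z \<in> UNIV \<times> U. h (fst z) (snd z) \<le> c})"

definition standing_assms where
  "standing_assms U \<sigma> b \<longleftrightarrow>
     compact U \<and> U \<noteq> {} \<and>
     continuous_on (UNIV \<times> U) (\<lambda>z. b (fst z) (snd z)) \<and>
     loc_lipschitz_unif U b \<and>
     (\<forall>R>0. \<exists>L. \<forall>x\<in>cball 0 R. \<forall>y\<in>cball 0 R. onorm (\<lambda>v. (\<sigma> x - \<sigma> y) *v v) \<le> L * norm (x - y)) \<and>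
     (\<exists>C. \<forall>x. \<forall>u\<in>U. (norm (b x u))\<^sup>2 + (onorm (\<lambda>v. \<sigma> x *v v))\<^sup>2 \<le> C * (1 + (norm x)\<^sup>2)) \<and>
     (\<forall>R>0. \<exists>\<kappa>>0. \<forall>x\<in>cball 0 R. \<forall>\<xi>. \<xi> \<bullet> ((\<sigma> x ** transpose (\<sigma> x)) *v \<xi>) \<ge> \<kappa> * (norm \<xi>)\<^sup>2)"

definition cost_assm :: "'u::metric_space set \<Rightarrow> (real^'n::finite \<Rightarrow> 'u \<Rightarrow> real) \<Rightarrow> bool" where
  "cost_assm U g \<longleftrightarrow> (\<forall>x. \<forall>u\<in>U. 0 \<le> g x u) \<and>
     continuous_on (UNIV \<times> U) (\<lambda>z. g (fst z) (snd z)) \<and> loc_lipschitz_unif U g"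

definition hypA where
  "hypA U \<sigma> b r \<longleftrightarrow> (\<exists>K. open K \<and>
     (\<forall>c. compact (closure K \<inter> {x. (INF u\<in>U. r x u) \<le> c})) \<and>
     (\<exists>V h. C2_fun V \<and> (\<forall>x. 0 \<le> V x) \<and> inf_compact_x V \<and>
        continuous_on (UNIV \<times> U) (\<lambda>z. h (fst z) (snd z)) \<and>
        (\<forall>x. \<forall>u\<in>U. 0 \<le> h x u) \<and> inf_compact_xu U h \<and>
        (\<forall>x\<in>-K. \<forall>u\<in>U. Lgen \<sigma> b V x u \<le> 1 - h x u) \<and>
        (\<forall>x\<in>K. \<forall>u\<in>U. Lgen \<sigma> b V x u \<le> 1 + r x u)))"

end

theory Submission
  imports Defs
begin

definition mix :: "real \<Rightarrow> 'a measure \<Rightarrow> 'a measure \<Rightarrow> 'a measure" where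
  "mix t p q = measure_pmf (bernoulli_pmf t) \<bind> (\<lambda>b. if b then p else q)"

lemma mix_meas:
  assumes "prob_space p" "prob_space q" "sets q = sets p"
  shows "(\<lambda>b. if b then p else q) \<in> measurable (measure_pmf (bernoulli_pmf t)) (subprob_algebra p)"
  using assms by (auto simp: space_subprob_algebra prob_space_imp_subprob_space)

lemma sets_mix:
  assumes "prob_space p" "prob_space q" "sets q = sets p"
  shows "sets (mix t p q) = sets p"
  unfolding mix_def by (rule sets_bind) (use assms in auto)

lemma nn_mix:
  assumes "prob_space p" "prob_space q" "sets q = sets p" "0 \<le> t" "t \<le> 1"
    and f: "f \<in> borel_measurable p"
  shows "(\<integral>\<^sup>+z. f z \<partial>mix t p q) = (\<integral>\<^sup>+z. f z \<partial>p) * ennreal t + (\<integral>\<^sup>+z. f z \<partial>q) * ennreal (1 - t)"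
proof -
  have "(\<integral>\<^sup>+z. f z \<partial>mix t p q) = (\<integral>\<^sup>+b. \<integral>\<^sup>+z. f z \<partial>(if b then p else q) \<partial>measure_pmf (bernoulli_pmf t))"
    unfolding mix_def by (rule nn_integral_bind[OF f mix_meas[OF assms(1-3)]])
  also have "\<dots> = (\<integral>\<^sup>+z. f z \<partial>p) * ennreal t + (\<integral>\<^sup>+z. f z \<partial>q) * ennreal (1 - t)"
    using assms by (subst nn_integral_bernoulli_pmf) auto
  finally show ?thesis .
qed

lemma prob_mix:
  assumes "prob_space p" "prob_space q" "sets q = sets p" "0 \<le> t" "t \<le> 1"
  shows "prob_space (mix t p q)"
  unfolding mix_def
  by (rule prob_space.prob_space_bind[OF prob_space_measure_pmf _ mix_meas[OF assms(1-3)]])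
     (use assms in auto)

lemma enn2real_comb:
  assumes "X \<noteq> \<top>" "Y \<noteq> \<top>" "0 \<le> t" "t \<le> 1"
  shows "enn2real (X * ennreal t + Y * ennreal (1 - t)) = enn2real X * t + enn2real Y * (1 - t)"
proof -
  obtain x y where "X = ennreal x" "Y = ennreal y" "0 \<le> x" "0 \<le> y"
    using assms(1,2) by (metis enn2real_nonneg ennreal_enn2real_if)
  then show ?thesis using assms(3,4)
    by (simp add: ennreal_mult[symmetric] ennreal_plus[symmetric] del: ennreal_plus)
qed

lemma int_mix:
  fixes g :: "'a \<Rightarrow> real"
  assumes "prob_space p" "prob_space q" "sets q = sets p" "0 < t" "t < 1"
    and "integrable (mix t p q) g"
  shows "integral\<^sup>L (mix t p q) g = t * integral\<^sup>L p g + (1 - t) * integral\<^sup>L q g"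
proof -
  have sm: "sets (mix t p q) = sets p" by (rule sets_mix) (use assms in auto)
  have gm: "g \<in> borel_measurable p"
    using integrableD(1)[OF assms(6)] measurable_cong_sets[OF sm refl] by blast
  have gmq: "g \<in> borel_measurable q"
    using gm measurable_cong_sets[OF assms(3) refl] by blast
  have m1: "(\<lambda>z. ennreal (g z)) \<in> borel_measurable p" using gm by measurable
  have m2: "(\<lambda>z. ennreal (- g z)) \<in> borel_measurable p" using gm by measurable
  note e1 = nn_mix[OF assms(1-3) _ _ m1] and e2 = nn_mix[OF assms(1-3) _ _ m2]
  define A1 where "A1 = (\<integral>\<^sup>+z. ennreal (g z) \<partial>p)"
  define A2 where "A2 = (\<integral>\<^sup>+z. ennreal (g z) \<partial>q)"
  define B1 where "B1 = (\<integral>\<^sup>+z. ennreal (- g z) \<partial>p)"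
  define B2 where "B2 = (\<integral>\<^sup>+z. ennreal (- g z) \<partial>q)"
  have fa: "A1 * ennreal t + A2 * ennreal (1 - t) \<noteq> \<infinity>"
    using integrableD(2)[OF assms(6)] e1 assms(4,5) by (simp add: A1_def A2_def)
  have fb: "B1 * ennreal t + B2 * ennreal (1 - t) \<noteq> \<infinity>"
    using integrableD(3)[OF assms(6)] e2 assms(4,5) by (simp add: B1_def B2_def)
  have t1: "ennreal t \<noteq> 0" "ennreal (1-t) \<noteq> 0" using assms(4,5) by auto
  have A1f: "A1 \<noteq> \<infinity>" using fa t1 by (auto simp: ennreal_mult_eq_top_iff)
  have A2f: "A2 \<noteq> \<infinity>" using fa t1 by (auto simp: ennreal_mult_eq_top_iff)
  have B1f: "B1 \<noteq> \<infinity>" using fb t1 by (auto simp: ennreal_mult_eq_top_iff)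
  have B2f: "B2 \<noteq> \<infinity>" using fb t1 by (auto simp: ennreal_mult_eq_top_iff)
  have ip: "integrable p g" unfolding real_integrable_def using gm A1f B1f by (simp add: A1_def B1_def)
  have iq: "integrable q g" unfolding real_integrable_def using gmq A2f B2f by (simp add: A2_def B2_def)
  have "integral\<^sup>L (mix t p q) g = enn2real (A1 * ennreal t + A2 * ennreal (1 - t))
       - enn2real (B1 * ennreal t + B2 * ennreal (1 - t))"
    using real_lebesgue_integral_def[OF assms(6)] e1 e2 assms(4,5)
    by (simp add: A1_def A2_def B1_def B2_def)
  also have "\<dots> = (enn2real A1 * t + enn2real A2 * (1-t)) - (enn2real B1 * t + enn2real B2 * (1-t))"
    using A1f A2f B1f B2f assms(4,5) by (simp add: enn2real_comb)
  also have "\<dots> = t * integral\<^sup>L p g + (1 - t) * integral\<^sup>L q g"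
    unfolding real_lebesgue_integral_def[OF ip] real_lebesgue_integral_def[OF iq]
      A1_def A2_def B1_def B2_def by (simp add: algebra_simps)
  finally show ?thesis .
qed

lemma UxU_borel: "closed U \<Longrightarrow> (UNIV \<times> U :: ('a::topological_space \<times> 'b::topological_space) set) \<in> sets borel"
  by (intro borel_closed closed_Times) auto

lemma prob_on_AE:
  assumes "prob_on U M" "closed U"
  shows "AE z in M. z \<in> UNIV \<times> U"
proof -
  interpret prob_space M using assms(1) by (simp add: prob_on_def)
  have s: "sets M = sets borel" using assms(1) by (simp add: prob_on_def)
  have A: "UNIV \<times> U \<in> events" using UxU_borel[OF assms(2)] s by simp
  have "prob (UNIV \<times> U) = 1" using assms(1) by (simp add: prob_on_def emeasure_eq_measure)
  then show ?thesis using AE_in_set_eq_1[OF A] by simp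
qed

lemma cost_restr:
  assumes "prob_on U M" "closed U"
  shows "cost_int M g = (\<integral>\<^sup>+z. ennreal (indicator (UNIV \<times> U) z *\<^sub>R g (fst z) (snd z)) \<partial>M)"
  unfolding cost_int_def
  by (rule nn_integral_cong_AE) (use prob_on_AE[OF assms] in \<open>auto elim!: AE_mp\<close>)

lemma prob_on_mix:
  assumes "prob_on U p" "prob_on U q" "closed U" "0 \<le> t" "t \<le> 1"
  shows "prob_on U (mix t p q)"
proof -
  have pp: "prob_space p" "prob_space q" "sets q = sets p" "sets p = sets borel"
    using assms by (auto simp: prob_on_def)
  have sm: "sets (mix t p q) = sets borel" using sets_mix[OF pp(1-3)] pp(4) by simp
  have A: "UNIV \<times> U \<in> sets borel" using UxU_borel[OF assms(3)] .
  have im: "indicator (UNIV \<times> U) \<in> borel_measurable p"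
    using A pp(4) by (intro borel_measurable_indicator) simp
  have "emeasure (mix t p q) (UNIV \<times> U) = (\<integral>\<^sup>+z. indicator (UNIV \<times> U) z \<partial>mix t p q)"
    using A sm by (subst nn_integral_indicator) auto
  also have "\<dots> = emeasure p (UNIV \<times> U) * ennreal t + emeasure q (UNIV \<times> U) * ennreal (1 - t)"
  proof -
    have "UNIV \<times> U \<in> sets p" "UNIV \<times> U \<in> sets q" using A pp by auto
    then show ?thesis using nn_mix[OF pp(1-3) assms(4,5) im] by (simp add: nn_integral_indicator)
  qed
  also have "\<dots> = 1" using assms by (simp add: prob_on_def ennreal_plus[symmetric] del: ennreal_plus)
  finally show ?thesis using prob_mix[OF pp(1-3) assms(4,5)] sm by (simp add: prob_on_def)
qed

lemma cost_mix:
  assumes "prob_on U p" "prob_on U q" "closed U" "0 \<le> t" "t \<le> 1"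
    and cg: "continuous_on (UNIV \<times> U) (\<lambda>z. g (fst z) (snd z))"
  shows "cost_int (mix t p q) g = cost_int p g * ennreal t + cost_int q g * ennreal (1 - t)"
proof -
  have pp: "prob_space p" "prob_space q" "sets q = sets p" "sets p = sets borel"
    using assms by (auto simp: prob_on_def)
  have gm: "(\<lambda>z. indicator (UNIV \<times> U) z *\<^sub>R g (fst z) (snd z)) \<in> borel_measurable borel"
    by (rule borel_measurable_continuous_on_indicator[OF UxU_borel[OF assms(3)] cg])
  have gm': "(\<lambda>z. ennreal (indicator (UNIV \<times> U) z *\<^sub>R g (fst z) (snd z))) \<in> borel_measurable p"
  proof -
    have "(\<lambda>z. indicator (UNIV \<times> U) z *\<^sub>R g (fst z) (snd z)) \<in> borel_measurable p"
      using gm measurable_cong_sets[OF pp(4) refl] by blast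
    then show ?thesis by measurable
  qed
  show ?thesis
    unfolding cost_restr[OF prob_on_mix[OF assms(1-5)] assms(3)] cost_restr[OF assms(1,3)]
      cost_restr[OF assms(2,3)]
    by (rule nn_mix[OF pp(1-3) assms(4,5) gm'])
qed

lemma occ_mix:
  assumes "p \<in> occ_G U \<sigma> b" "q \<in> occ_G U \<sigma> b" "closed U" "0 < t" "t < 1"
  shows "mix t p q \<in> occ_G U \<sigma> b"
proof -
  have po: "prob_on U p" "prob_on U q" using assms by (auto simp: occ_G_def)
  have pp: "prob_space p" "prob_space q" "sets q = sets p"
    using po by (auto simp: prob_on_def)
  show ?thesis unfolding occ_G_def
  proof (intro CollectI conjI ballI)
    show "prob_on U (mix t p q)" using prob_on_mix[OF po assms(3)] assms(4,5) by simp
    fix f :: "real^'a \<Rightarrow> real" assume f: "f \<in> Cc_inf"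
    show "(\<integral>z. Lgen \<sigma> b f (fst z) (snd z) \<partial>mix t p q) = 0"
    proof (cases "integrable (mix t p q) (\<lambda>z. Lgen \<sigma> b f (fst z) (snd z))")
      case True
      show ?thesis using int_mix[OF pp assms(4,5) True] assms(1,2) f by (simp add: occ_G_def)
    next
      case False then show ?thesis by (simp add: not_integrable_integral_eq)
    qed
  qed
qed

theorem lemma3p4:
  fixes U :: "'u::metric_space set"
    and \<sigma> :: "real^'n::finite \<Rightarrow> real^'n^'n"
    and b :: "real^'n \<Rightarrow> 'u \<Rightarrow> real^'n"
    and r0 :: "real^'n \<Rightarrow> 'u \<Rightarrow> real"
    and rc :: "'k::finite \<Rightarrow> real^'n \<Rightarrow> 'u \<Rightarrow> real"
    and \<delta>h :: "real^'k"
  assumes "standing_assms U \<sigma> b"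
    and "cost_assm U r0"
    and "\<forall>i. cost_assm U (rc i)"
    and "hypA U \<sigma> b (\<lambda>x u. r0 x u + (\<Sum>i\<in>UNIV. rc i x u))"
    and "feasible U \<sigma> b r0 rc \<delta>h"
  shows "continuous (at \<delta>h within {\<delta>. \<forall>i. 0 \<le> \<delta> $ i}) (opt_val U \<sigma> b r0 rc)"
proof -
  let ?O = "opt_val U \<sigma> b r0 rc"
  have clU: "closed U" using assms(1) by (simp add: standing_assms_def compact_imp_closed)
  have c0: "continuous_on (UNIV \<times> U) (\<lambda>z. r0 (fst z) (snd z))"
    using assms(2) by (simp add: cost_assm_def)
  have ci: "\<And>i. continuous_on (UNIV \<times> U) (\<lambda>z. rc i (fst z) (snd z))"
    using assms(3) by (simp add: cost_assm_def)
  obtain \<pi>' where \<pi>': "\<pi>' \<in> H_open U \<sigma> b rc \<delta>h" "cost_int \<pi>' r0 < \<infinity>"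
    using assms(5) by (auto simp: feasible_def)
  have \<pi>'G: "\<pi>' \<in> occ_G U \<sigma> b" using \<pi>'(1) by (simp add: H_open_def)
  have \<pi>'lt: "\<And>i. cost_int \<pi>' (rc i) < ennreal (\<delta>h $ i)" using \<pi>'(1) by (simp add: H_open_def)
  define c where "c i = enn2real (cost_int \<pi>' (rc i))" for i
  have cc: "cost_int \<pi>' (rc i) = ennreal (c i)" for i
  proof -
    have "cost_int \<pi>' (rc i) < top" using \<pi>'lt[of i] ennreal_less_top by (rule less_trans)
    then show ?thesis unfolding c_def by simp
  qed
  have c0le: "0 \<le> c i" for i by (simp add: c_def)
  have clt: "c i < \<delta>h $ i" for i using \<pi>'lt[of i] cc[of i] c0le[of i] by (simp add: ennreal_less_iff)
  define N where "N = {\<delta>::real^'k. \<forall>i. c i < \<delta> $ i}"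
  have hN: "\<delta>h \<in> N" using clt by (simp add: N_def)
  have openN: "open N"
  proof -
    have "N = (\<Inter>i\<in>UNIV. {\<delta>::real^'k. \<delta> $ i > c i})" by (auto simp: N_def)
    then show ?thesis by (auto intro!: open_INT open_halfspace_component_gt_cart)
  qed
  have convN: "convex N"
    unfolding convex_def
  proof (intro ballI allI impI)
    fix x y :: "real^'k" and u v :: real
    assume xN: "x \<in> N" and yN: "y \<in> N" and u: "0 \<le> u" and v: "0 \<le> v" and uv: "u + v = 1"
    have x: "\<forall>i. c i < x $ i" and y: "\<forall>i. c i < y $ i" using xN yN by (auto simp: N_def)
    show "u *\<^sub>R x + v *\<^sub>R y \<in> N" unfolding N_def
    proof (intro CollectI allI)
      fix i
      have "c i < u * x $ i + v * y $ i"
      proof (cases "u = 0")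
        case True then show ?thesis using uv y by simp
      next
        case False
        then have "u * c i < u * x $ i" using u x by (simp add: mult_strict_left_mono)
        moreover have "v * c i \<le> v * y $ i" using v y by (simp add: less_imp_le mult_left_mono)
        ultimately have "u * c i + v * c i < u * x $ i + v * y $ i" by linarith
        then show ?thesis using uv by (simp add: distrib_right[symmetric])
      qed
      then show "c i < (u *\<^sub>R x + v *\<^sub>R y) $ i" by simp
    qed
  qed
  have Nnn: "\<And>\<delta> i. \<delta> \<in> N \<Longrightarrow> 0 \<le> \<delta> $ i"
    using c0le by (auto simp: N_def intro: order.trans[OF _ less_imp_le])
  have inH: "\<And>\<delta>. \<delta> \<in> N \<Longrightarrow> \<pi>' \<in> H_set U \<sigma> b rc \<delta>"
  proof -
    fix \<delta> assume "\<delta> \<in> N"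
    then have "c i \<le> \<delta> $ i" for i by (auto simp: N_def less_imp_le)
    then show "\<pi>' \<in> H_set U \<sigma> b rc \<delta>" using \<pi>'G cc by (simp add: H_set_def ennreal_leI)
  qed
  have Ofin: "\<And>\<delta>. \<delta> \<in> N \<Longrightarrow> ?O \<delta> < \<infinity>"
  proof -
    fix \<delta> assume "\<delta> \<in> N"
    then have "?O \<delta> \<le> cost_int \<pi>' r0" unfolding opt_val_def by (rule INF_lower[OF inH])
    then show "?O \<delta> < \<infinity>" using \<pi>'(2) by (rule le_less_trans)
  qed
  define f where "f \<delta> = enn2real (?O \<delta>)" for \<delta>
  have Oeq: "\<And>\<delta>. \<delta> \<in> N \<Longrightarrow> ?O \<delta> = ennreal (f \<delta>)"
    unfolding f_def using Ofin by (simp add: less_top)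
  have f0: "0 \<le> f \<delta>" for \<delta> by (simp add: f_def)
  have convf: "convex_on N f"
  proof (rule convex_onI[OF _ convN])
    fix t :: real and x y :: "real^'k" assume t: "0 < t" "t < 1" and x: "x \<in> N" and y: "y \<in> N"
    define z where "z = (1 - t) *\<^sub>R x + t *\<^sub>R y"
    have z: "z \<in> N" unfolding z_def using convN x y t by (simp add: convex_def)
    show "f ((1 - t) *\<^sub>R x + t *\<^sub>R y) \<le> (1 - t) * f x + t * f y"
      unfolding z_def[symmetric]
    proof (rule field_le_epsilon)
      fix e :: real assume e: "0 < e"
      have "?O x < ennreal (f x + e)" using Oeq[OF x] e f0[of x] by (simp add: ennreal_less_iff)
      then obtain p where p: "p \<in> H_set U \<sigma> b rc x" "cost_int p r0 < ennreal (f x + e)"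
        unfolding opt_val_def INF_less_iff by blast
      have "?O y < ennreal (f y + e)" using Oeq[OF y] e f0[of y] by (simp add: ennreal_less_iff)
      then obtain q where q: "q \<in> H_set U \<sigma> b rc y" "cost_int q r0 < ennreal (f y + e)"
        unfolding opt_val_def INF_less_iff by blast
      have pG: "p \<in> occ_G U \<sigma> b" and qG: "q \<in> occ_G U \<sigma> b" using p q by (auto simp: H_set_def)
      have po: "prob_on U p" "prob_on U q" using pG qG by (auto simp: occ_G_def)
      let ?m = "mix (1 - t) p q"
      have t': "0 \<le> 1 - t" "1 - t \<le> 1" using t by auto
      have mG: "?m \<in> occ_G U \<sigma> b" using occ_mix[OF pG qG clU] t by simp
      have cm: "\<And>g. continuous_on (UNIV \<times> U) (\<lambda>z. g (fst z) (snd z)) \<Longrightarrow>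
          cost_int ?m g = cost_int p g * ennreal (1 - t) + cost_int q g * ennreal t"
        using cost_mix[OF po clU t'] by simp
      have mH: "?m \<in> H_set U \<sigma> b rc z"
        unfolding H_set_def
      proof (intro CollectI conjI allI mG)
        fix i
        have "cost_int ?m (rc i) = cost_int p (rc i) * ennreal (1 - t) + cost_int q (rc i) * ennreal t"
          by (rule cm[OF ci])
        also have "\<dots> \<le> ennreal (x $ i) * ennreal (1 - t) + ennreal (y $ i) * ennreal t"
          using p(1) q(1) by (intro add_mono mult_right_mono) (auto simp: H_set_def)
        also have "\<dots> = ennreal (x $ i * (1 - t)) + ennreal (y $ i * t)"
          using Nnn[OF x, of i] Nnn[OF y, of i] t by (simp add: ennreal_mult)
        also have "\<dots> = ennreal (x $ i * (1 - t) + y $ i * t)"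
          using Nnn[OF x, of i] Nnn[OF y, of i] t by (intro ennreal_plus[symmetric]) auto
        also have "\<dots> = ennreal (z $ i)" by (simp add: z_def algebra_simps)
        finally show "cost_int ?m (rc i) \<le> ennreal (z $ i)" .
      qed
      have "ennreal (f z) = ?O z" using Oeq[OF z] by simp
      also have "\<dots> \<le> cost_int ?m r0" unfolding opt_val_def by (rule INF_lower[OF mH])
      also have "\<dots> = cost_int p r0 * ennreal (1 - t) + cost_int q r0 * ennreal t" by (rule cm[OF c0])
      also have "\<dots> \<le> ennreal (f x + e) * ennreal (1 - t) + ennreal (f y + e) * ennreal t"
        using p(2) q(2) by (intro add_mono mult_right_mono) auto
      also have "\<dots> = ennreal ((f x + e) * (1 - t)) + ennreal ((f y + e) * t)"
        using f0[of x] f0[of y] t e by (simp add: ennreal_mult)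
      also have "\<dots> = ennreal ((f x + e) * (1 - t) + (f y + e) * t)"
        using f0[of x] f0[of y] t e by (intro ennreal_plus[symmetric]) auto
      also have "\<dots> = ennreal ((1 - t) * f x + t * f y + e)" by (simp add: algebra_simps)
      finally show "f z \<le> (1 - t) * f x + t * f y + e"
        using f0[of x] f0[of y] t e by (subst (asm) ennreal_le_iff) (auto intro: add_nonneg_nonneg)
    qed
  qed
  have "continuous_on N f" by (rule convex_on_continuous[OF openN convf])
  then have "isCont f \<delta>h" using openN hN by (simp add: continuous_on_eq_continuous_at)
  then have "(f \<longlongrightarrow> f \<delta>h) (at \<delta>h)" by (simp add: isCont_def)
  then have "((\<lambda>\<delta>. ennreal (f \<delta>)) \<longlongrightarrow> ennreal (f \<delta>h)) (at \<delta>h)" by (rule tendsto_ennrealI)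
  then have "(?O \<longlongrightarrow> ennreal (f \<delta>h)) (at \<delta>h)"
    by (rule Lim_transform_within_open[OF _ openN hN]) (simp add: Oeq)
  then have "isCont ?O \<delta>h" using Oeq[OF hN] by (simp add: isCont_def)
  then show ?thesis by (rule continuous_at_imp_continuous_at_within)
qed

end
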